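(* Consider the networked feedback system described in the context, under the input assumption stated there, and let $d_i(k)=\omega(k,k-i)u(k-i)$ for $i\in\mathcal D$. Then for all integers $k_1,k_2\ge 0$: (1) for $i\in\mathcal D$, $\mathbb E\{d_i(k_1)d_i(k_2)\}=\delta(k_1-k_2)\,\alpha_i^2p_i(1-p_i)\,\mathbb E\{u^2(k_1-i)\}$; (2) for $i_1\ne i_2$ in $\mathcal D$, $\mathbb E\{d_{i_1}(k_1)d_{i_2}(k_2)\}=-\delta(k_1-i_1-k_2+i_2)\,\alpha_{i_1}\alpha_{i_2}p_{i_1}p_{i_2}\,\mathbb E\{u^2(k_1-i_1)\}$.
   Context: Setting: $P$ is a SISO discrete-time LTI plant which is strictly proper (relative degree $\ge1$), $K$ a proper SISO LTI controller. Let $\tau\ge0$ be an integer, $\mathcal D=\{0,\dots,\tau\}$, and $\{\tau_n\}$ an i.i.d. sequence with values in $\mathcal D$, $\Pr\{\tau_n=i\}=p_i$, $\sum_ip_i=1$. With real weights $\alpha_0,\dots,\alpha_\tau$ and Kronecker delta $\delta$, the channel maps $u$ to $u_d(k)=\sum_{i=0}^{\tau}\alpha_i\delta(\tau_{k-i}-i)u(k-i)$. Closed loop: plant input $v-u_d$, plant output $y$, $u=Ky$; signals real, system at rest at $k=0$ (signals vanish for $k<0$). Define $\omega(k,n)=\alpha_{k-n}[\delta(\tau_n-(k-n))-p_{k-n}]$ if $n\le k\le n+\tau$ and $\omega(k,n)=0$ otherwise. Input assumption: $\{\tau_n\}$ is independent of $\{v(k)\}$, and $\{v(k)\}$ is zero-mean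 white noise (independent values) with bounded variances. *)

theory Defs
  imports "HOL-Probability.Probability"
begin

text \<open>Kronecker delta on the integers.\<close>
definition kron :: "int \<Rightarrow> real" where
  "kron j = (if j = 0 then 1 else 0)"

text \<open>Extension of a signal indexed by nat (times k \<ge> 0) to all integer times,
  vanishing for negative times (system at rest).\<close>
definition sig_ext :: "(nat \<Rightarrow> 'w \<Rightarrow> real) \<Rightarrow> int \<Rightarrow> 'w \<Rightarrow> real" where
  "sig_ext s j w = (if j < 0 then 0 else s (nat j) w)"

text \<open>Channel output
  u_d(k) = \<Sum>_{i=0}^{tau} alpha_i \<delta>(tau_{k-i} - i) u(k-i), with u(k-i) = 0 for k < i.\<close>
definition chan_out ::
  "(nat \<Rightarrow> real) \<Rightarrow> nat \<Rightarrow> (nat \<Rightarrow> 'w \<Rightarrow> nat) \<Rightarrow> (nat \<Rightarrow> 'w \<Rightarrow> real) \<Rightarrow> nat \<Rightarrow> 'w \<Rightarrow> real" where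
  "chan_out alpha tau taus u k w =
     (\<Sum>i\<in>{0..tau}. if i \<le> k
        then alpha i * kron (int (taus (k - i) w) - int i) * u (k - i) w else 0)"

text \<open>omega(k,n) = alpha_{k-n} [\<delta>(tau_n - (k-n)) - p_{k-n}] if n \<le> k \<le> n + tau, else 0.\<close>
definition omega_ch ::
  "(nat \<Rightarrow> real) \<Rightarrow> (nat \<Rightarrow> real) \<Rightarrow> nat \<Rightarrow> (nat \<Rightarrow> 'w \<Rightarrow> nat) \<Rightarrow> nat \<Rightarrow> nat \<Rightarrow> 'w \<Rightarrow> real" where
  "omega_ch alpha p tau taus k n w =
     (if n \<le> k \<and> k \<le> n + tau
      then alpha (k - n) * (kron (int (taus n w) - int (k - n)) - p (k - n)) else 0)"

text \<open>d_i(k) = omega(k, k-i) u(k-i), which is 0 when k - i < 0 (u vanishes there).\<close>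
definition d_ch ::
  "(nat \<Rightarrow> real) \<Rightarrow> (nat \<Rightarrow> real) \<Rightarrow> nat \<Rightarrow> (nat \<Rightarrow> 'w \<Rightarrow> nat) \<Rightarrow> (nat \<Rightarrow> 'w \<Rightarrow> real) \<Rightarrow> nat \<Rightarrow> nat \<Rightarrow> 'w \<Rightarrow> real" where
  "d_ch alpha p tau taus u i k w =
     (if i \<le> k then omega_ch alpha p tau taus k (k - i) w * u (k - i) w else 0)"

text \<open>Closed loop, sample path by sample path.  The strictly proper SISO plant P is given by a
  state-space realization (A,B,C) (no feedthrough), the proper SISO controller K by (Ak,Bk,Ck,Dk);
  both start at rest (zero state at k = 0).  Plant input is v - u_d, plant output y, u = K y.\<close>
definition closed_loop ::
  "real^'n^'n \<Rightarrow> real^'n \<Rightarrow> real^'n \<Rightarrow> real^'m^'m \<Rightarrow> real^'m \<Rightarrow> real^'m \<Rightarrow> real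
   \<Rightarrow> (nat \<Rightarrow> real) \<Rightarrow> nat \<Rightarrow> (nat \<Rightarrow> 'w \<Rightarrow> nat)
   \<Rightarrow> (nat \<Rightarrow> 'w \<Rightarrow> real) \<Rightarrow> (nat \<Rightarrow> 'w \<Rightarrow> real) \<Rightarrow> (nat \<Rightarrow> 'w \<Rightarrow> real) \<Rightarrow> 'w \<Rightarrow> bool" where
  "closed_loop A B C Ak Bk Ck Dk alpha tau taus v u y w \<longleftrightarrow>
     (\<exists>xp :: nat \<Rightarrow> real^'n. \<exists>xk :: nat \<Rightarrow> real^'m.
        xp 0 = 0 \<and> xk 0 = 0 \<and>
        (\<forall>k. xp (Suc k) = A *v xp k + (v k w - chan_out alpha tau taus u k w) *\<^sub>R B) \<and>
        (\<forall>k. y k w = C \<bullet> xp k) \<and>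
        (\<forall>k. xk (Suc k) = Ak *v xk k + y k w *\<^sub>R Bk) \<and>
        (\<forall>k. u k w = Ck \<bullet> xk k + Dk * y k w))"

end

theory Submission
  imports Defs
begin

lemma memE1: "x \<in> {f A | A. P A} \<Longrightarrow> (\<And>A. x = f A \<Longrightarrow> P A \<Longrightarrow> Q) \<Longrightarrow> Q"
  by blast
lemma memE2: "x \<in> {f A B | A B. P A B} \<Longrightarrow> (\<And>A B. x = f A B \<Longrightarrow> P A B \<Longrightarrow> Q) \<Longrightarrow> Q"
  by blast

lemma (in prob_space) indep_set_Int_ext:
  assumes S: "S = sigma_sets (space M) T" "T \<subseteq> events"
   and ab: "indep_set Ta Tb" and sub: "Ta \<subseteq> S" "Tb \<subseteq> S"
   and SV: "indep_set S V"
  shows "indep_set Ta {B \<inter> C | B C. B \<in> Tb \<and> C \<in> V}"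
proof (rule indep_setI)
  have Sev: "S \<subseteq> events" unfolding S(1) by (rule sets.sigma_sets_subset[OF S(2)])
  show "Ta \<subseteq> events" using sub Sev by auto
  have Vev: "V \<subseteq> events" using indep_setD_ev2[OF SV] .
  show "{B \<inter> C | B C. B \<in> Tb \<and> C \<in> V} \<subseteq> events"
  proof safe
    fix B C assume "B \<in> Tb" "C \<in> V"
    then show "B \<inter> C \<in> events" using sub Sev Vev by (intro sets.Int) auto
  qed
  fix a x assume a: "a \<in> Ta" and "x \<in> {B \<inter> C | B C. B \<in> Tb \<and> C \<in> V}"
  then obtain B C where x: "x = B \<inter> C" "B \<in> Tb" "C \<in> V" by auto
  have Tp: "T \<subseteq> Pow (space M)"
  proof (rule subsetI, rule PowI)
    fix t assume "t \<in> T" then show "t \<subseteq> space M" using S(2) \<open>t \<in> T\<close> by (meson subsetD sets.sets_into_space)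
  qed
  interpret SA: sigma_algebra "space M" S unfolding S(1) by (rule sigma_algebra_sigma_sets[OF Tp])
  have aB: "a \<inter> B \<in> S" using a x sub by (intro SA.Int) auto
  have "prob (a \<inter> x) = prob ((a \<inter> B) \<inter> C)" using x by (simp add: Int_assoc)
  also have "\<dots> = prob (a \<inter> B) * prob C" using indep_setD[OF SV aB x(3)] .
  also have "\<dots> = prob a * prob B * prob C" using indep_setD[OF ab a x(2)] by simp
  also have "\<dots> = prob a * prob (B \<inter> C)"
  proof -
    have "B \<in> S" using x sub by auto
    then show ?thesis using indep_setD[OF SV _ x(3), of B] by simp
  qed
  finally show "prob (a \<inter> x) = prob a * prob x" using x by simp
qed

definition Tev :: "'w measure \<Rightarrow> (nat \<Rightarrow> 'w \<Rightarrow> nat) \<Rightarrow> nat \<Rightarrow> 'w set set" where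
  "Tev M taus j = {taus j -` A \<inter> space M | A. A \<in> sets (count_space UNIV)}"

definition Gs :: "'w measure \<Rightarrow> (nat \<Rightarrow> 'w \<Rightarrow> nat) \<Rightarrow> (nat \<Rightarrow> 'w \<Rightarrow> real) \<Rightarrow> nat \<Rightarrow> 'w set set" where
  "Gs M taus v n = {B \<inter> C | B C. B \<in> sigma_sets (space M) (\<Union>j\<in>{..<n}. Tev M taus j)
      \<and> C \<in> sigma_sets (space M) (\<Union>k. {v k -` A \<inter> space M | A. A \<in> sets borel})}"

lemma Int_stable_Tev: "Int_stable (Tev M taus j)"
proof (rule Int_stableI)
  fix a b assume "a \<in> Tev M taus j" "b \<in> Tev M taus j"
  then obtain A B where ab: "a = taus j -` A \<inter> space M" "b = taus j -` B \<inter> space M"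
    unfolding Tev_def by blast
  have "a \<inter> b = taus j -` (A \<inter> B) \<inter> space M" unfolding ab by blast
  moreover have "A \<inter> B \<in> sets (count_space UNIV)" by simp
  ultimately show "a \<inter> b \<in> Tev M taus j" unfolding Tev_def by blast
qed

context prob_space begin

lemma Tev_events: assumes tj: "taus j \<in> measurable M (count_space UNIV)" shows "Tev M taus j \<subseteq> events"
proof (rule subsetI)
  fix x assume "x \<in> Tev M taus j"
  then obtain A where "x = taus j -` A \<inter> space M" "A \<in> sets (count_space UNIV)"
    unfolding Tev_def by blast
  then show "x \<in> events" using measurable_sets[OF tj] by simp
qed

lemma Gs_events:
  assumes tm: "\<And>j. taus j \<in> measurable M (count_space UNIV)" and vm: "\<And>k. v k \<in> borel_measurable M"
  shows "Gs M taus v n \<subseteq> events"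
proof -
  have "(\<Union>j\<in>{..<n}. Tev M taus j) \<subseteq> events"
  proof (rule UN_least)
    fix j show "Tev M taus j \<subseteq> events" by (rule Tev_events[of taus j, OF tm[of j]])
  qed
  then have 1: "sigma_sets (space M) (\<Union>j\<in>{..<n}. Tev M taus j) \<subseteq> events"
    by (rule sets.sigma_sets_subset)
  have "(\<Union>k. {v k -` A \<inter> space M | A. A \<in> sets borel}) \<subseteq> events"
  proof (rule UN_least, rule subsetI)
    fix k x assume "x \<in> {v k -` A \<inter> space M | A. A \<in> sets borel}"
    then show "x \<in> events"
    proof (rule memE1)
      fix A assume "x = v k -` A \<inter> space M" "A \<in> sets borel"
      then show "x \<in> events" using measurable_sets[OF vm[of k]] by simp
    qed
  qed
  then have 2: "sigma_sets (space M) (\<Union>k. {v k -` A \<inter> space M | A. A \<in> sets borel}) \<subseteq> events"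
    by (rule sets.sigma_sets_subset)
  show ?thesis unfolding Gs_def
  proof (rule subsetI)
    fix x assume "x \<in> {B \<inter> C | B C. B \<in> sigma_sets (space M) (\<Union>j\<in>{..<n}. Tev M taus j)
      \<and> C \<in> sigma_sets (space M) (\<Union>k. {v k -` A \<inter> space M | A. A \<in> sets borel})}"
    then show "x \<in> events"
    proof (rule memE2)
      fix B C assume "x = B \<inter> C" "B \<in> sigma_sets (space M) (\<Union>j\<in>{..<n}. Tev M taus j)
        \<and> C \<in> sigma_sets (space M) (\<Union>k. {v k -` A \<inter> space M | A. A \<in> sets borel})"
      then have "x = B \<inter> C" "B \<in> events" "C \<in> events" using 1 2 by (auto simp only: subset_iff)
      then show "x \<in> events" by simp
    qed
  qed
qed

lemma indep_main:
  assumes tm: "\<And>n. taus n \<in> measurable M (count_space UNIV)"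
    and vm: "\<And>k. v k \<in> borel_measurable M"
    and it: "indep_vars (\<lambda>_. count_space UNIV) taus UNIV"
    and tv: "indep_set
           (sigma_sets (space M) (\<Union>n. {taus n -` A \<inter> space M | A. A \<in> sets (count_space UNIV)}))
           (sigma_sets (space M) (\<Union>k. {v k -` A \<inter> space M | A. A \<in> sets borel}))"
  shows "indep_set (sigma_sets (space M) (Tev M taus n)) (sigma_sets (space M) (Gs M taus v n))"
proof -
  define TL where "TL = sigma_sets (space M) (\<Union>j\<in>{..<n}. Tev M taus j)"
  define VA where "VA = sigma_sets (space M) (\<Union>k. {v k -` A \<inter> space M | A. A \<in> sets borel})"
  have i1: "indep_sets (Tev M taus) UNIV"
    using it unfolding indep_vars_def2 Tev_def by (simp only:)
  have "indep_sets (\<lambda>b. sigma_sets (space M) (\<Union>i\<in>case_bool {n} {..<n} b. Tev M taus i)) UNIV"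
  proof (rule indep_sets_collect_sigma)
    show "indep_sets (Tev M taus) (\<Union>j\<in>UNIV. case_bool {n} {..<n} j)"
      by (rule indep_sets_mono_index[OF _ i1]) simp
    show "Int_stable (Tev M taus i)" for i by (rule Int_stable_Tev)
    show "disjoint_family_on (case_bool {n} {..<n}) UNIV"
      unfolding disjoint_family_on_def by (simp split: bool.split)
  qed
  then have i2: "indep_set (Tev M taus n) TL"
    unfolding indep_set_def
  proof (rule indep_sets_mono_sets)
    fix b :: bool
    show "(case b of True \<Rightarrow> Tev M taus n | False \<Rightarrow> TL)
       \<subseteq> sigma_sets (space M) (\<Union>i\<in>case_bool {n} {..<n} b. Tev M taus i)"
    proof (cases b)
      case True
      show ?thesis using True by (simp add: subset_iff sigma_sets.Basic)
    next
      case False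
      show ?thesis using False by (simp add: TL_def)
    qed
  qed
  have Tall: "(\<Union>n. Tev M taus n) \<subseteq> events"
  proof (rule UN_least)
    fix j show "Tev M taus j \<subseteq> events" by (rule Tev_events[of taus j, OF tm[of j]])
  qed
  have i3: "indep_set (Tev M taus n) {B \<inter> C | B C. B \<in> TL \<and> C \<in> VA}"
  proof (rule indep_set_Int_ext[OF _ Tall i2])
    show "Tev M taus n \<subseteq> sigma_sets (space M) (\<Union>n. Tev M taus n)"
    proof
      fix x assume "x \<in> Tev M taus n" then show "x \<in> sigma_sets (space M) (\<Union>n. Tev M taus n)"
        by (intro sigma_sets.Basic) (rule UN_I[OF UNIV_I])
    qed
    show "TL \<subseteq> sigma_sets (space M) (\<Union>n. Tev M taus n)"
      unfolding TL_def by (rule sigma_sets_subseteq) (rule UN_mono, simp_all)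
    show "indep_set (sigma_sets (space M) (\<Union>n. Tev M taus n)) VA"
      using tv unfolding VA_def Tev_def .
  qed (rule refl)
  have G: "Gs M taus v n = {B \<inter> C | B C. B \<in> TL \<and> C \<in> VA}"
    unfolding Gs_def TL_def VA_def ..
  have p1: "(\<Union>j\<in>{..<n}. Tev M taus j) \<subseteq> Pow (space M)"
  proof (rule subsetI, rule PowI)
    fix x assume "x \<in> (\<Union>j\<in>{..<n}. Tev M taus j)"
    then obtain j where "x \<in> Tev M taus j" by (rule UN_E)
    then have "x \<in> events" using Tev_events[of taus j, OF tm[of j]] by (rule subsetD[rotated])
    then show "x \<subseteq> space M" by (rule sets.sets_into_space)
  qed
  have p2: "(\<Union>k. {v k -` A \<inter> space M | A. A \<in> sets borel}) \<subseteq> Pow (space M)"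
  proof (rule subsetI, rule PowI)
    fix x assume "x \<in> (\<Union>k. {v k -` A \<inter> space M | A. A \<in> sets borel})"
    then obtain k where "x \<in> {v k -` A \<inter> space M | A. A \<in> sets borel}" by (rule UN_E)
    then show "x \<subseteq> space M"
    proof (rule memE1)
      fix A assume "x = v k -` A \<inter> space M" then show "x \<subseteq> space M" by (simp only: Int_lower2)
    qed
  qed
  have S1: "sigma_algebra (space M) TL" unfolding TL_def by (rule sigma_algebra_sigma_sets[OF p1])
  have S2: "sigma_algebra (space M) VA" unfolding VA_def by (rule sigma_algebra_sigma_sets[OF p2])
  have IG: "Int_stable {B \<inter> C | B C. B \<in> TL \<and> C \<in> VA}"
  proof (rule Int_stableI)
    fix a b assume a: "a \<in> {B \<inter> C | B C. B \<in> TL \<and> C \<in> VA}" and b: "b \<in> {B \<inter> C | B C. B \<in> TL \<and> C \<in> VA}"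
    from a show "a \<inter> b \<in> {B \<inter> C | B C. B \<in> TL \<and> C \<in> VA}"
    proof (rule memE2)
      fix B C assume B: "a = B \<inter> C" "B \<in> TL \<and> C \<in> VA"
      from b show ?thesis
      proof (rule memE2)
        fix B' C' assume B': "b = B' \<inter> C'" "B' \<in> TL \<and> C' \<in> VA"
        have e2: "a \<inter> b = (B \<inter> B') \<inter> (C \<inter> C')" using B B' by blast
        have BB: "B \<inter> B' \<in> TL" using B B' Int_stableD[OF algebra.Int_stable[OF sigma_algebra.axioms(1)[OF S1]]] by simp
        have CC: "C \<inter> C' \<in> VA" using B B' Int_stableD[OF algebra.Int_stable[OF sigma_algebra.axioms(1)[OF S2]]] by simp
        show ?thesis unfolding e2 using BB CC by blast
      qed
    qed
  qed
  show ?thesis unfolding G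
    by (rule indep_set_sigma_sets[OF i3 Int_stable_Tev IG])
qed

end

context prob_space begin

lemma Gs_Pow:
  assumes tm: "\<And>j. taus j \<in> measurable M (count_space UNIV)" and vm: "\<And>k. v k \<in> borel_measurable M"
  shows "Gs M taus v n \<subseteq> Pow (space M)"
proof (rule subsetI, rule PowI)
  fix x assume "x \<in> Gs M taus v n"
  then have "x \<in> events" using Gs_events[of taus v n, OF tm vm] by (rule subsetD[rotated])
  then show "x \<subseteq> space M" by (rule sets.sets_into_space)
qed

lemma Fsets:
  assumes tm: "\<And>j. taus j \<in> measurable M (count_space UNIV)" and vm: "\<And>k. v k \<in> borel_measurable M"
  shows "sets (sigma (space M) (Gs M taus v n)) = sigma_sets (space M) (Gs M taus v n)"
    and "space (sigma (space M) (Gs M taus v n)) = space M"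
  using sets_measure_of[OF Gs_Pow[of taus v n, OF tm vm]] space_measure_of_conv by simp_all

lemma Fsub:
  assumes tm: "\<And>j. taus j \<in> measurable M (count_space UNIV)" and vm: "\<And>k. v k \<in> borel_measurable M"
  shows "sets (sigma (space M) (Gs M taus v n)) \<subseteq> events"
  unfolding Fsets[of taus v n, OF tm vm] by (rule sets.sigma_sets_subset[OF Gs_events[of taus v n, OF tm vm]])

lemma Fmono:
  assumes tm: "\<And>j. taus j \<in> measurable M (count_space UNIV)" and vm: "\<And>k. v k \<in> borel_measurable M"
    and jk: "j \<le> k"
  shows "sets (sigma (space M) (Gs M taus v j)) \<subseteq> sets (sigma (space M) (Gs M taus v k))"
  unfolding Fsets[of taus v, OF tm vm]
proof (rule sigma_sets_subseteq)
  have "sigma_sets (space M) (\<Union>i\<in>{..<j}. Tev M taus i) \<subseteq> sigma_sets (space M) (\<Union>i\<in>{..<k}. Tev M taus i)"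
    by (rule sigma_sets_subseteq) (rule UN_mono, use jk in auto)
  note sub = this
  show "Gs M taus v j \<subseteq> Gs M taus v k"
  proof (rule subsetI)
    fix x assume "x \<in> Gs M taus v j"
    then show "x \<in> Gs M taus v k" unfolding Gs_def
    proof (rule memE2)
      fix B C assume "x = B \<inter> C" "B \<in> sigma_sets (space M) (\<Union>i\<in>{..<j}. Tev M taus i)
         \<and> C \<in> sigma_sets (space M) (\<Union>k. {v k -` A \<inter> space M | A. A \<in> sets borel})"
      then have "x = B \<inter> C" "B \<in> sigma_sets (space M) (\<Union>i\<in>{..<k}. Tev M taus i)"
         "C \<in> sigma_sets (space M) (\<Union>k. {v k -` A \<inter> space M | A. A \<in> sets borel})"
        using sub
        by (auto simp only: subset_iff)
      then show "x \<in> {B \<inter> C | B C. B \<in> sigma_sets (space M) (\<Union>i\<in>{..<k}. Tev M taus i)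
         \<and> C \<in> sigma_sets (space M) (\<Union>k. {v k -` A \<inter> space M | A. A \<in> sets borel})}" by blast
    qed
  qed
qed

lemma Fm_taus:
  assumes tm: "\<And>j. taus j \<in> measurable M (count_space UNIV)" and vm: "\<And>k. v k \<in> borel_measurable M"
    and jn: "j < n"
  shows "taus j \<in> measurable (sigma (space M) (Gs M taus v n)) (count_space UNIV)"
proof (rule measurableI)
  fix A :: "nat set" assume "A \<in> sets (count_space UNIV)"
  have "taus j -` A \<inter> space M \<in> Tev M taus j" unfolding Tev_def by (intro CollectI exI[of _ A]) simp
  then have B: "taus j -` A \<inter> space M \<in> sigma_sets (space M) (\<Union>i\<in>{..<n}. Tev M taus i)"
    using jn by (intro sigma_sets.Basic UN_I[of j]) simp_all
  have C: "space M \<in> sigma_sets (space M) (\<Union>k. {v k -` A \<inter> space M | A. A \<in> sets borel})"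
    by (rule sigma_sets_top)
  have "(taus j -` A \<inter> space M) \<inter> space M \<in> Gs M taus v n"
    unfolding Gs_def using B C by (intro CollectI exI[of _ "taus j -` A \<inter> space M"] exI[of _ "space M"]) simp
  then show "taus j -` A \<inter> space (sigma (space M) (Gs M taus v n)) \<in> sets (sigma (space M) (Gs M taus v n))"
    unfolding Fsets[of taus v n, OF tm vm] by (simp add: Int_absorb2 sigma_sets.Basic)
qed simp

lemma Fm_v:
  assumes tm: "\<And>j. taus j \<in> measurable M (count_space UNIV)" and vm: "\<And>k. v k \<in> borel_measurable M"
  shows "v k \<in> borel_measurable (sigma (space M) (Gs M taus v n))"
proof (rule measurableI)
  fix A :: "real set" assume A: "A \<in> sets borel"
  have B: "space M \<in> sigma_sets (space M) (\<Union>i\<in>{..<n}. Tev M taus i)"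
    by (rule sigma_sets_top)
  have C: "v k -` A \<inter> space M \<in> sigma_sets (space M) (\<Union>k. {v k -` A \<inter> space M | A. A \<in> sets borel})"
    using A by (intro sigma_sets.Basic UN_I[of k] UNIV_I CollectI exI[of _ A]) simp
  have "space M \<inter> (v k -` A \<inter> space M) \<in> Gs M taus v n"
    unfolding Gs_def using B C by (intro CollectI exI[of _ "space M"] exI[of _ "v k -` A \<inter> space M"]) simp
  then show "v k -` A \<inter> space (sigma (space M) (Gs M taus v n)) \<in> sets (sigma (space M) (Gs M taus v n))"
    unfolding Fsets[of taus v n, OF tm vm] by (simp add: Int_absorb1 sigma_sets.Basic)
qed simp

lemma factor:
  assumes tm: "\<And>n. taus n \<in> measurable M (count_space UNIV)"
    and vm: "\<And>k. v k \<in> borel_measurable M"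
    and it: "indep_vars (\<lambda>_. count_space UNIV) taus UNIV"
    and tv: "indep_set
           (sigma_sets (space M) (\<Union>n. {taus n -` A \<inter> space M | A. A \<in> sets (count_space UNIV)}))
           (sigma_sets (space M) (\<Union>k. {v k -` A \<inter> space M | A. A \<in> sets borel}))"
    and X: "X \<in> borel_measurable (sigma (space M) (Gs M taus v n))"
    and iX: "integrable M X" and ig: "integrable M (\<lambda>w. g (taus n w) :: real)"
  shows "expectation (\<lambda>w. g (taus n w) * X w) = expectation (\<lambda>w. g (taus n w)) * expectation X"
proof -
  have XM: "X \<in> borel_measurable M"
    by (rule subsetD[OF measurable_mono[OF order_refl refl Fsub[of taus v n, OF tm vm] Fsets(2)[of taus v n, OF tm vm]] X])
  have gM: "(\<lambda>w. g (taus n w)) \<in> borel_measurable M"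
    using tm[of n] by measurable
  have I0: "indep_set (sigma_sets (space M) (Tev M taus n)) (sigma_sets (space M) (Gs M taus v n))"
    by (rule indep_main[OF tm vm it tv])
  have s1: "sigma_sets (space M) {(\<lambda>w. g (taus n w)) -` A \<inter> space M | A. A \<in> sets borel}
      \<subseteq> sigma_sets (space M) (Tev M taus n)"
  proof (rule sigma_sets_subseteq, rule subsetI)
    fix x assume "x \<in> {(\<lambda>w. g (taus n w)) -` A \<inter> space M | A. A \<in> sets borel}"
    then show "x \<in> Tev M taus n"
    proof (rule memE1)
      fix A assume "x = (\<lambda>w. g (taus n w)) -` A \<inter> space M"
      then have "x = taus n -` (g -` A) \<inter> space M" by auto
      then show "x \<in> Tev M taus n" unfolding Tev_def by (intro CollectI exI[of _ "g -` A"]) simp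
    qed
  qed
  have s2: "sigma_sets (space M) {X -` A \<inter> space M | A. A \<in> sets borel}
      \<subseteq> sigma_sets (space M) (Gs M taus v n)"
  proof (rule sigma_sets_mono, rule subsetI)
    fix x assume "x \<in> {X -` A \<inter> space M | A. A \<in> sets borel}"
    then show "x \<in> sigma_sets (space M) (Gs M taus v n)"
    proof (rule memE1)
      fix A :: "real set" assume "x = X -` A \<inter> space M" "A \<in> sets borel"
      then show ?thesis using measurable_sets[OF X, of A] unfolding Fsets[of taus v n, OF tm vm] by simp
    qed
  qed
  have "indep_var borel (\<lambda>w. g (taus n w)) borel X"
    unfolding indep_var_eq
  proof (intro conjI)
    show "random_variable borel (\<lambda>w. g (taus n w))" by (rule gM)
    show "random_variable borel X" by (rule XM)
    show "indep_set (sigma_sets (space M) {(\<lambda>w. g (taus n w)) -` A \<inter> space M | A. A \<in> sets borel})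
       (sigma_sets (space M) {X -` A \<inter> space M | A. A \<in> sets borel})"
      using I0 unfolding indep_set_def
      by (rule indep_sets_mono_sets) (use s1 s2 in \<open>simp split: bool.split\<close>)
  qed
  then show ?thesis using indep_var_lebesgue_integral[OF _ ig iX] by simp
qed

end

lemma meas_lift:
  assumes sp: "\<And>k. space (F k) = S" and mono: "\<And>j k. j \<le> k \<Longrightarrow> sets (F j) \<subseteq> sets (F k)"
    and f: "f \<in> borel_measurable (F j)" and jk: "j \<le> k"
  shows "f \<in> borel_measurable (F k)"
  using subsetD[OF measurable_mono[OF order_refl refl mono[OF jk]] f] sp by simp

lemma loop_meas:
  fixes F :: "nat \<Rightarrow> 'w measure" and XP :: "'w \<Rightarrow> nat \<Rightarrow> real^'n" and XK :: "'w \<Rightarrow> nat \<Rightarrow> real^'m"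
  assumes sp: "\<And>k. space (F k) = S"
   and mono: "\<And>j k. j \<le> k \<Longrightarrow> sets (F j) \<subseteq> sets (F k)"
   and tm: "\<And>j k. j < k \<Longrightarrow> taus j \<in> measurable (F k) (count_space UNIV)"
   and vm: "\<And>j k. v j \<in> borel_measurable (F k)"
   and r0: "\<And>w. w \<in> S \<Longrightarrow> XP w 0 = 0" "\<And>w. w \<in> S \<Longrightarrow> XK w 0 = 0"
   and rP: "\<And>w k. w \<in> S \<Longrightarrow> XP w (Suc k) = A *v XP w k + (v k w - chan_out alpha tau taus u k w) *\<^sub>R B"
   and rK: "\<And>w k. w \<in> S \<Longrightarrow> XK w (Suc k) = Ak *v XK w k + (C \<bullet> XP w k) *\<^sub>R Bk"
   and ru: "\<And>w k. w \<in> S \<Longrightarrow> u k w = Ck \<bullet> XK w k + Dk * (C \<bullet> XP w k)"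
  shows "u k \<in> borel_measurable (F k)"
proof -
  have uM: "u j \<in> borel_measurable (F k)"
    if "(\<lambda>w. XP w j) \<in> borel_measurable (F k)" "(\<lambda>w. XK w j) \<in> borel_measurable (F k)" for j k
  proof -
    have "(\<lambda>w. Ck \<bullet> XK w j + Dk * (C \<bullet> XP w j)) \<in> borel_measurable (F k)"
      using that by measurable
    then show ?thesis using measurable_cong[of "F k" "u j" "\<lambda>w. Ck \<bullet> XK w j + Dk * (C \<bullet> XP w j)"] ru sp
      by simp
  qed
  have "\<forall>j\<le>k. (\<lambda>w. XP w j) \<in> borel_measurable (F k) \<and> (\<lambda>w. XK w j) \<in> borel_measurable (F k)
           \<and> u j \<in> borel_measurable (F k)"
  proof (induction k)
    case 0
    have P: "(\<lambda>w. XP w 0) \<in> borel_measurable (F 0)"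
      using measurable_cong[of "F 0" "\<lambda>w. XP w 0" "\<lambda>w. 0"] r0 sp by simp
    have K: "(\<lambda>w. XK w 0) \<in> borel_measurable (F 0)"
      using measurable_cong[of "F 0" "\<lambda>w. XK w 0" "\<lambda>w. 0"] r0 sp by simp
    show ?case using P K uM[OF P K] by simp
  next
    case (Suc k)
    have lift: "f \<in> borel_measurable (F (Suc k))" if "f \<in> borel_measurable (F k)" for f :: "'w \<Rightarrow> 'z::topological_space"
      using meas_lift[of F S, OF sp mono that, of "Suc k"] by (simp add: le_SucI)
    have IHP: "(\<lambda>w. XP w j) \<in> borel_measurable (F (Suc k))" if "j \<le> k" for j
      using Suc.IH that lift by blast
    have IHK: "(\<lambda>w. XK w j) \<in> borel_measurable (F (Suc k))" if "j \<le> k" for j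
      using Suc.IH that lift by blast
    have IHu: "u j \<in> borel_measurable (F (Suc k))" if "j \<le> k" for j
      using Suc.IH that lift by blast
    have ch: "(\<lambda>w. chan_out alpha tau taus u k w) \<in> borel_measurable (F (Suc k))"
      unfolding chan_out_def
    proof (rule borel_measurable_sum)
      fix i assume "i \<in> {0..tau}"
      show "(\<lambda>w. if i \<le> k then alpha i * kron (int (taus (k - i) w) - int i) * u (k - i) w else 0)
          \<in> borel_measurable (F (Suc k))"
      proof (cases "i \<le> k")
        case True
        have t: "taus (k - i) \<in> measurable (F (Suc k)) (count_space UNIV)" by (rule tm) simp
        have uu: "u (k - i) \<in> borel_measurable (F (Suc k))" by (rule IHu) simp
        have "(\<lambda>w. alpha i * kron (int (taus (k - i) w) - int i) * u (k - i) w) \<in> borel_measurable (F (Suc k))"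
          using t uu by measurable
        then show ?thesis using True by simp
      qed simp
    qed
    have lin: "(\<lambda>w. (A::real^'n^'n) *v f w) \<in> borel_measurable N" if "f \<in> borel_measurable N" for f N
      by (rule borel_measurable_continuous_on[OF matrix_vector_mult_linear_continuous_on that])
    have linK: "(\<lambda>w. (Ak::real^'m^'m) *v f w) \<in> borel_measurable N" if "f \<in> borel_measurable N" for f N
      by (rule borel_measurable_continuous_on[OF matrix_vector_mult_linear_continuous_on that])
    have P: "(\<lambda>w. XP w (Suc k)) \<in> borel_measurable (F (Suc k))"
    proof -
      have "(\<lambda>w. A *v XP w k + (v k w - chan_out alpha tau taus u k w) *\<^sub>R B) \<in> borel_measurable (F (Suc k))"
        using lin[OF IHP[OF order_refl]] vm[of k "Suc k"] ch by measurable
      then show ?thesis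
        using measurable_cong[of "F (Suc k)" "\<lambda>w. XP w (Suc k)" "\<lambda>w. A *v XP w k + (v k w - chan_out alpha tau taus u k w) *\<^sub>R B"] rP sp
        by simp
    qed
    have K: "(\<lambda>w. XK w (Suc k)) \<in> borel_measurable (F (Suc k))"
    proof -
      have "(\<lambda>w. Ak *v XK w k + (C \<bullet> XP w k) *\<^sub>R Bk) \<in> borel_measurable (F (Suc k))"
        using linK[OF IHK[OF order_refl]] IHP[OF order_refl] by measurable
      then show ?thesis
        using measurable_cong[of "F (Suc k)" "\<lambda>w. XK w (Suc k)" "\<lambda>w. Ak *v XK w k + (C \<bullet> XP w k) *\<^sub>R Bk"] rK sp
        by simp
    qed
    show ?case
    proof (intro allI impI)
      fix j assume "j \<le> Suc k"
      then consider "j \<le> k" | "j = Suc k" by linarith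
      then show "(\<lambda>w. XP w j) \<in> borel_measurable (F (Suc k)) \<and> (\<lambda>w. XK w j) \<in> borel_measurable (F (Suc k))
           \<and> u j \<in> borel_measurable (F (Suc k))"
      proof cases
        case 1 then show ?thesis using IHP IHK IHu by blast
      next
        case 2 then show ?thesis using P K uM[OF P K] by simp
      qed
    qed
  qed
  then show ?thesis by simp
qed

lemma kron_abs: "\<bar>kron j\<bar> \<le> 1" by (simp add: kron_def)
lemma kron_nonneg: "0 \<le> kron j" by (simp add: kron_def)

lemma chan_bound:
  assumes "\<And>i. i \<le> k \<Longrightarrow> \<bar>u (k - i) w\<bar> \<le> b"
  shows "\<bar>chan_out alpha tau taus u k w\<bar> \<le> (\<Sum>i\<in>{0..tau}. \<bar>alpha i\<bar>) * b"
proof -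
  have "\<bar>chan_out alpha tau taus u k w\<bar> \<le> (\<Sum>i\<in>{0..tau}. \<bar>if i \<le> k
        then alpha i * kron (int (taus (k - i) w) - int i) * u (k - i) w else 0\<bar>)"
    unfolding chan_out_def by (rule sum_abs)
  also have "\<dots> \<le> (\<Sum>i\<in>{0..tau}. \<bar>alpha i\<bar> * b)"
  proof (rule sum_mono)
    fix i assume "i \<in> {0..tau}"
    show "\<bar>if i \<le> k then alpha i * kron (int (taus (k - i) w) - int i) * u (k - i) w else 0\<bar> \<le> \<bar>alpha i\<bar> * b"
    proof (cases "i \<le> k")
      case True
      have b: "\<bar>u (k - i) w\<bar> \<le> b" using assms True by blast
      have "\<bar>alpha i * kron (int (taus (k - i) w) - int i) * u (k - i) w\<bar>
          = \<bar>alpha i\<bar> * (\<bar>kron (int (taus (k - i) w) - int i)\<bar> * \<bar>u (k - i) w\<bar>)"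
        by (simp add: abs_mult)
      also have "\<dots> \<le> \<bar>alpha i\<bar> * (1 * b)"
        by (intro mult_left_mono mult_mono kron_abs b) simp_all
      finally show ?thesis using True by simp
    next
      case False
      have "0 \<le> b" using assms[of 0] by simp
      then show ?thesis using False by simp
    qed
  qed
  also have "\<dots> = (\<Sum>i\<in>{0..tau}. \<bar>alpha i\<bar>) * b" by (simp add: sum_distrib_right)
  finally show ?thesis .
qed

lemma loop_bound:
  fixes XP :: "'w \<Rightarrow> nat \<Rightarrow> real^'n" and XK :: "'w \<Rightarrow> nat \<Rightarrow> real^'m"
  assumes r0: "\<And>w. w \<in> S \<Longrightarrow> XP w 0 = 0" "\<And>w. w \<in> S \<Longrightarrow> XK w 0 = 0"
   and rP: "\<And>w k. w \<in> S \<Longrightarrow> XP w (Suc k) = A *v XP w k + (v k w - chan_out alpha tau taus u k w) *\<^sub>R B"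
   and rK: "\<And>w k. w \<in> S \<Longrightarrow> XK w (Suc k) = Ak *v XK w k + (C \<bullet> XP w k) *\<^sub>R Bk"
   and ru: "\<And>w k. w \<in> S \<Longrightarrow> u k w = Ck \<bullet> XK w k + Dk * (C \<bullet> XP w k)"
  shows "\<exists>c\<ge>0. \<forall>w\<in>S. \<bar>u k w\<bar> \<le> c * (\<Sum>l<k. \<bar>v l w\<bar>)"
proof -
  obtain KA where KA: "KA \<ge> 0" "\<And>x. norm (A *v x) \<le> norm x * KA"
    using bounded_linear.nonneg_bounded[OF matrix_vector_mul_bounded_linear[of A]] by blast
  obtain KK where KK: "KK \<ge> 0" "\<And>x. norm (Ak *v x) \<le> norm x * KK"
    using bounded_linear.nonneg_bounded[OF matrix_vector_mul_bounded_linear[of Ak]] by blast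
  define cu where "cu = norm Ck + \<bar>Dk\<bar> * norm C"
  have cu0: "cu \<ge> 0" unfolding cu_def by simp
  have ub: "\<bar>u j w\<bar> \<le> cu * (norm (XP w j) + norm (XK w j))" if "w \<in> S" for j w
  proof -
    have "\<bar>u j w\<bar> \<le> \<bar>Ck \<bullet> XK w j\<bar> + \<bar>Dk\<bar> * \<bar>C \<bullet> XP w j\<bar>"
      using ru[OF that] by (simp add: abs_mult) (rule abs_triangle_ineq[THEN order_trans], simp add: abs_mult)
    also have "\<dots> \<le> norm Ck * norm (XK w j) + \<bar>Dk\<bar> * (norm C * norm (XP w j))"
      by (intro add_mono mult_left_mono Cauchy_Schwarz_ineq2) simp_all
    also have "\<dots> \<le> cu * (norm (XP w j) + norm (XK w j))"
      unfolding cu_def by (simp add: algebra_simps mult_nonneg_nonneg)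
    finally show ?thesis .
  qed
  define al where "al = (\<Sum>i\<in>{0..tau}. \<bar>alpha i\<bar>)"
  have al0: "al \<ge> 0" unfolding al_def by (simp add: sum_nonneg)
  have main: "\<exists>c\<ge>0. \<forall>j\<le>k. \<forall>w\<in>S. norm (XP w j) + norm (XK w j) \<le> c * (\<Sum>l<k. \<bar>v l w\<bar>)"
  proof (induction k)
    case 0
    show ?case by (rule exI[of _ 0]) (simp add: r0)
  next
    case (Suc k)
    then obtain c where c0: "c \<ge> 0" and IH: "\<And>j w. j \<le> k \<Longrightarrow> w \<in> S \<Longrightarrow> norm (XP w j) + norm (XK w j) \<le> c * (\<Sum>l<k. \<bar>v l w\<bar>)"
      by blast
    define c1 where "c1 = KA * c + al * cu * c * norm B + KK * c + norm C * c * norm Bk"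
    have c10: "c1 \<ge> 0" unfolding c1_def using KA KK c0 al0 cu0 by simp
    define c' where "c' = c + c1 + norm B"
    have "\<forall>j\<le>Suc k. \<forall>w\<in>S. norm (XP w j) + norm (XK w j) \<le> c' * (\<Sum>l<Suc k. \<bar>v l w\<bar>)"
    proof (intro allI impI ballI)
      fix j w assume j: "j \<le> Suc k" and w: "w \<in> S"
      define s where "s = (\<Sum>l<k. \<bar>v l w\<bar>)"
      have s0: "s \<ge> 0" unfolding s_def by (simp add: sum_nonneg)
      have ss: "(\<Sum>l<Suc k. \<bar>v l w\<bar>) = s + \<bar>v k w\<bar>" unfolding s_def by simp
      have fin: "c1 * s + norm B * \<bar>v k w\<bar> \<le> c' * (s + \<bar>v k w\<bar>)"
        unfolding c'_def using c0 c10 s0 by (simp add: algebra_simps add_nonneg_nonneg mult_nonneg_nonneg add_increasing)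
      have fin2: "c * s \<le> c' * (s + \<bar>v k w\<bar>)"
        unfolding c'_def using c0 c10 s0 by (simp add: algebra_simps add_nonneg_nonneg mult_nonneg_nonneg add_increasing)
      show "norm (XP w j) + norm (XK w j) \<le> c' * (\<Sum>l<Suc k. \<bar>v l w\<bar>)"
      proof (cases "j \<le> k")
        case True
        then show ?thesis using IH[OF True w] fin2 ss unfolding s_def by simp
      next
        case False
        then have jS: "j = Suc k" using j by simp
        have hP: "norm (XP w k) \<le> c * s" using IH[OF order_refl w] norm_ge_zero[of "XK w k"] unfolding s_def by linarith
        have hK: "norm (XK w k) \<le> c * s" using IH[OF order_refl w] norm_ge_zero[of "XP w k"] unfolding s_def by linarith
        have hu: "\<bar>u (k - i) w\<bar> \<le> cu * (c * s)" if "i \<le> k" for i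
          using ub[OF w, of "k - i"] IH[of "k - i", OF _ w] cu0 unfolding s_def
          by (meson diff_le_self mult_left_mono order_trans)
        have hch: "\<bar>chan_out alpha tau taus u k w\<bar> \<le> al * (cu * (c * s))"
          unfolding al_def by (rule chan_bound) (rule hu)
        have "norm (XP w (Suc k)) \<le> norm (A *v XP w k) + \<bar>v k w - chan_out alpha tau taus u k w\<bar> * norm B"
          using rP[OF w] by (simp add: norm_triangle_ineq[THEN order_trans])
        also have "\<dots> \<le> (c * s) * KA + (\<bar>v k w\<bar> + al * (cu * (c * s))) * norm B"
        proof (intro add_mono mult_right_mono)
          show "norm (A *v XP w k) \<le> c * s * KA"
            using KA(2)[of "XP w k"] hP KA(1) by (meson mult_right_mono order_trans)
          show "\<bar>v k w - chan_out alpha tau taus u k w\<bar> \<le> \<bar>v k w\<bar> + al * (cu * (c * s))"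
            using hch abs_triangle_ineq4[of "v k w" "chan_out alpha tau taus u k w"] by linarith
        qed simp
        finally have nP: "norm (XP w (Suc k)) \<le> (c * s) * KA + (\<bar>v k w\<bar> + al * (cu * (c * s))) * norm B" .
        have "norm (XK w (Suc k)) \<le> norm (Ak *v XK w k) + \<bar>C \<bullet> XP w k\<bar> * norm Bk"
          using rK[OF w] by (simp add: norm_triangle_ineq[THEN order_trans])
        also have "\<dots> \<le> (c * s) * KK + (norm C * (c * s)) * norm Bk"
        proof (intro add_mono mult_right_mono)
          show "norm (Ak *v XK w k) \<le> c * s * KK"
            using KK(2)[of "XK w k"] hK KK(1) by (meson mult_right_mono order_trans)
          show "\<bar>C \<bullet> XP w k\<bar> \<le> norm C * (c * s)"
            using Cauchy_Schwarz_ineq2[of C "XP w k"] hP by (meson mult_left_mono norm_ge_zero order_trans)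
        qed simp
        finally have nK: "norm (XK w (Suc k)) \<le> (c * s) * KK + (norm C * (c * s)) * norm Bk" .
        have "norm (XP w j) + norm (XK w j) \<le> c1 * s + norm B * \<bar>v k w\<bar>"
          using nP nK unfolding jS c1_def by (simp add: algebra_simps)
        then show ?thesis using fin ss by simp
      qed
    qed
    moreover have "c' \<ge> 0" unfolding c'_def using c0 c10 by simp
    ultimately show ?case by blast
  qed
  then obtain c where c0: "c \<ge> 0" and hc: "\<And>w. w \<in> S \<Longrightarrow> norm (XP w k) + norm (XK w k) \<le> c * (\<Sum>l<k. \<bar>v l w\<bar>)"
    by blast
  show ?thesis
  proof (intro exI[of _ "cu * c"] conjI ballI)
    show "0 \<le> cu * c" using cu0 c0 by simp
    fix w assume w: "w \<in> S"
    show "\<bar>u k w\<bar> \<le> cu * c * (\<Sum>l<k. \<bar>v l w\<bar>)"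
      using ub[OF w, of k] hc[OF w] cu0 by (metis mult.assoc mult_left_mono order_trans)
  qed
qed

definition hh :: "(nat \<Rightarrow> real) \<Rightarrow> nat \<Rightarrow> nat \<Rightarrow> real" where
  "hh p i j = kron (int j - int i) - p i"

lemma sum_kron:
  assumes "i \<le> tau"
  shows "(\<Sum>j\<in>{0..tau}. kron (int j - int i) * f j) = f i"
proof -
  have "(\<Sum>j\<in>{0..tau}. kron (int j - int i) * f j) = (\<Sum>j\<in>{0..tau}. if i = j then f j else 0)"
    by (rule sum.cong) (auto simp: kron_def)
  also have "\<dots> = f i" using assms by (simp add: sum.delta)
  finally show ?thesis .
qed

lemma sum_hh2:
  assumes a: "a \<le> tau" and b: "b \<le> tau" and ps: "(\<Sum>i\<in>{0..tau}. p i) = 1"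
  shows "(\<Sum>j\<in>{0..tau}. (hh p a j * hh p b j) * p j) = kron (int a - int b) * p a - p a * p b"
proof -
  have "(\<Sum>j\<in>{0..tau}. (hh p a j * hh p b j) * p j)
     = (\<Sum>j\<in>{0..tau}. kron (int j - int a) * (kron (int j - int b) * p j))
       - p b * (\<Sum>j\<in>{0..tau}. kron (int j - int a) * p j)
       - p a * (\<Sum>j\<in>{0..tau}. kron (int j - int b) * p j)
       + p a * p b * (\<Sum>j\<in>{0..tau}. p j)"
    by (simp add: hh_def sum_distrib_left sum_subtractf[symmetric] sum.distrib[symmetric] algebra_simps)
  also have "\<dots> = kron (int a - int b) * p a - p a * p b"
    using sum_kron[OF a, of "\<lambda>j. kron (int j - int b) * p j"] sum_kron[OF a, of p] sum_kron[OF b, of p] ps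
    by simp
  finally show ?thesis .
qed

lemma sum_hh1:
  assumes b: "b \<le> tau" and ps: "(\<Sum>i\<in>{0..tau}. p i) = 1"
  shows "(\<Sum>j\<in>{0..tau}. hh p b j * p j) = 0"
proof -
  have "(\<Sum>j\<in>{0..tau}. hh p b j * p j) = (\<Sum>j\<in>{0..tau}. kron (int j - int b) * p j) - p b * (\<Sum>j\<in>{0..tau}. p j)"
    by (simp add: hh_def sum_distrib_left sum_subtractf[symmetric] algebra_simps)
  then show ?thesis using sum_kron[OF b, of p] ps by simp
qed

lemma hh_abs: "\<bar>hh p a j\<bar> \<le> 1 + \<bar>p a\<bar>"
  unfolding hh_def using kron_abs[of "int j - int a"] by linarith

lemma abs_prod_le_sq: "\<bar>(x::real) * y\<bar> \<le> x\<^sup>2 + y\<^sup>2"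
proof -
  have "0 \<le> (\<bar>x\<bar> - \<bar>y\<bar>)\<^sup>2" by simp
  then have "2 * (\<bar>x\<bar> * \<bar>y\<bar>) \<le> x\<^sup>2 + y\<^sup>2" by (simp add: power2_eq_square algebra_simps)
  moreover have "0 \<le> \<bar>x\<bar> * \<bar>y\<bar>" by simp
  ultimately have "\<bar>x\<bar> * \<bar>y\<bar> \<le> x\<^sup>2 + y\<^sup>2" by linarith
  then show ?thesis by (simp add: abs_mult)
qed

context prob_space begin

lemma exp_g:
  fixes taus :: "nat \<Rightarrow> 'a \<Rightarrow> nat" and tau :: nat and g p :: "nat \<Rightarrow> real"
  assumes tm: "taus n \<in> measurable M (count_space UNIV)" and tb: "\<And>w. w \<in> space M \<Longrightarrow> taus n w \<le> tau"
   and tp: "\<And>i. i \<le> tau \<Longrightarrow> measure M {w \<in> space M. taus n w = i} = p i"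
  shows "integrable M (\<lambda>w. g (taus n w) :: real)"
    and "expectation (\<lambda>w. g (taus n w)) = (\<Sum>i\<in>{0..tau}. g i * p i)"
proof -
  define E where "E i = {w \<in> space M. taus n w = i}" for i
  have Ev: "E i \<in> events" for i unfolding E_def using tm by measurable
  have eq: "g (taus n w) = (\<Sum>i\<in>{0..tau}. g i * indicator (E i) w)" if w: "w \<in> space M" for w
  proof -
    have "(\<Sum>i\<in>{0..tau}. g i * indicator (E i) w) = (\<Sum>i\<in>{0..tau}. if taus n w = i then g i else 0)"
      by (rule sum.cong) (auto simp: E_def indicator_def w)
    also have "\<dots> = g (taus n w)" using tb[OF w] by (subst sum.delta') auto
    finally show ?thesis by simp
  qed
  have ii: "integrable M (\<lambda>w. \<Sum>i\<in>{0..tau}. g i * indicator (E i) w)"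
    by (rule Bochner_Integration.integrable_sum, rule integrable_mult_right, rule integrable_real_indicator[OF Ev])
       (simp add: less_top[symmetric])
  show "integrable M (\<lambda>w. g (taus n w))"
    by (rule Bochner_Integration.integrable_cong[THEN iffD2, OF refl eq ii])
  have "expectation (\<lambda>w. g (taus n w)) = expectation (\<lambda>w. \<Sum>i\<in>{0..tau}. g i * indicator (E i) w)"
    by (rule Bochner_Integration.integral_cong[OF refl eq])
  also have "\<dots> = (\<Sum>i\<in>{0..tau}. g i * measure M (E i))"
    by (subst Bochner_Integration.integral_sum) (auto intro!: integrable_mult_right integrable_real_indicator Ev
        simp: less_top[symmetric] integral_indicator Int_absorb2 sets.sets_into_space Ev)
  also have "\<dots> = (\<Sum>i\<in>{0..tau}. g i * p i)"
    by (rule sum.cong) (auto simp: E_def tp)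
  finally show "expectation (\<lambda>w. g (taus n w)) = (\<Sum>i\<in>{0..tau}. g i * p i)" .
qed

lemma prod_int:
  fixes f g :: "'a \<Rightarrow> real"
  assumes "integrable M (\<lambda>w. (f w)\<^sup>2)" "integrable M (\<lambda>w. (g w)\<^sup>2)"
    "f \<in> borel_measurable M" "g \<in> borel_measurable M"
  shows "integrable M (\<lambda>w. f w * g w)"
proof (rule Bochner_Integration.integrable_bound)
  show "integrable M (\<lambda>w. (f w)\<^sup>2 + (g w)\<^sup>2)" using assms by simp
  show "(\<lambda>w. f w * g w) \<in> borel_measurable M" using assms by simp
  show "AE w in M. norm (f w * g w) \<le> norm ((f w)\<^sup>2 + (g w)\<^sup>2)"
    using abs_prod_le_sq by simp
qed

lemma sq_sum_int:
  assumes "\<And>l. integrable M (\<lambda>w. (v l w)\<^sup>2)" "\<And>l. v l \<in> borel_measurable M"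
  shows "integrable M (\<lambda>w. (\<Sum>l<(k::nat). \<bar>v l w\<bar> :: real)\<^sup>2)"
proof (induction k)
  case 0 then show ?case by simp
next
  case (Suc k)
  have m: "(\<lambda>w. \<Sum>l<k. \<bar>v l w\<bar>) \<in> borel_measurable M" using assms(2) by measurable
  have "integrable M (\<lambda>w. (\<Sum>l<k. \<bar>v l w\<bar>) * \<bar>v k w\<bar>)"
    by (rule prod_int) (use Suc.IH assms m in simp_all)
  then have "integrable M (\<lambda>w. (\<Sum>l<k. \<bar>v l w\<bar>)\<^sup>2 + 2 * ((\<Sum>l<k. \<bar>v l w\<bar>) * \<bar>v k w\<bar>) + (v k w)\<^sup>2)"
    using Suc.IH assms(1)[of k] by simp
  then show ?case by (simp add: power2_eq_square algebra_simps)
qed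

end

context prob_space begin

lemma core:
  fixes F :: "nat \<Rightarrow> 'a measure" and taus :: "nat \<Rightarrow> 'a \<Rightarrow> nat" and u :: "nat \<Rightarrow> 'a \<Rightarrow> real"
    and p :: "nat \<Rightarrow> real" and tau :: nat
  assumes sp: "\<And>k. space (F k) = space M"
   and mono: "\<And>j k. j \<le> k \<Longrightarrow> sets (F j) \<subseteq> sets (F k)"
   and tF: "\<And>j k. j < k \<Longrightarrow> taus j \<in> measurable (F k) (count_space UNIV)"
   and uF: "\<And>k. u k \<in> borel_measurable (F k)"
   and uM: "\<And>k. u k \<in> borel_measurable M"
   and ui: "\<And>k. integrable M (\<lambda>w. (u k w)\<^sup>2)"
   and FA: "\<And>n X (g :: nat \<Rightarrow> real). X \<in> borel_measurable (F n) \<Longrightarrow> integrable M X \<Longrightarrow>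
      expectation (\<lambda>w. g (taus n w) * X w) = (\<Sum>j\<in>{0..tau}. g j * p j) * expectation X"
   and tM: "\<And>j. taus j \<in> measurable M (count_space UNIV)"
   and ps: "(\<Sum>i\<in>{0..tau}. p i) = 1"
   and a: "a \<le> tau" and b: "b \<le> tau"
  shows "expectation (\<lambda>w. (hh p a (taus n1 w) * u n1 w) * (hh p b (taus n2 w) * u n2 w))
    = (if n1 = n2 then (kron (int a - int b) * p a - p a * p b) * expectation (\<lambda>w. (u n1 w)\<^sup>2) else 0)"
proof -
  have lt: "expectation (\<lambda>w. (hh p a' (taus m1 w) * u m1 w) * (hh p b' (taus m2 w) * u m2 w)) = 0"
    if m: "m1 < m2" and b': "b' \<le> tau" for a' b' m1 m2
  proof -
    define X where "X w = hh p a' (taus m1 w) * u m1 w * u m2 w" for w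
    have t1: "taus m1 \<in> measurable (F m2) (count_space UNIV)" by (rule tF[OF m])
    have mm: "m1 \<le> m2" using m by simp
    have u1: "u m1 \<in> borel_measurable (F m2)"
      by (rule meas_lift[of F "space M", OF sp mono uF mm])
    have XF: "X \<in> borel_measurable (F m2)"
      unfolding X_def hh_def using t1 u1 uF[of m2] by measurable
    have XM: "X \<in> borel_measurable M"
      unfolding X_def hh_def using tM[of m1] uM[of m1] uM[of m2] by measurable
    have Xi: "integrable M X"
    proof (rule Bochner_Integration.integrable_bound)
      show "integrable M (\<lambda>w. (1 + \<bar>p a'\<bar>) * (u m1 w * u m2 w))"
        by (rule integrable_mult_right, rule prod_int[OF ui ui uM uM])
      show "X \<in> borel_measurable M" by (rule XM)
      show "AE w in M. norm (X w) \<le> norm ((1 + \<bar>p a'\<bar>) * (u m1 w * u m2 w))"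
      proof (rule AE_I2)
        fix w
        have "norm (X w) = \<bar>hh p a' (taus m1 w)\<bar> * \<bar>u m1 w * u m2 w\<bar>"
          unfolding X_def by (simp add: abs_mult)
        also have "\<dots> \<le> (1 + \<bar>p a'\<bar>) * \<bar>u m1 w * u m2 w\<bar>"
          by (rule mult_right_mono[OF hh_abs abs_ge_zero])
        also have "\<dots> = norm ((1 + \<bar>p a'\<bar>) * (u m1 w * u m2 w))"
          by (simp add: abs_mult)
        finally show "norm (X w) \<le> norm ((1 + \<bar>p a'\<bar>) * (u m1 w * u m2 w))" .
      qed
    qed
    have "expectation (\<lambda>w. (hh p a' (taus m1 w) * u m1 w) * (hh p b' (taus m2 w) * u m2 w))
        = expectation (\<lambda>w. hh p b' (taus m2 w) * X w)"
      unfolding X_def by (simp add: algebra_simps)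
    also have "\<dots> = (\<Sum>j\<in>{0..tau}. hh p b' j * p j) * expectation X"
      by (rule FA[OF XF Xi])
    also have "\<dots> = 0" using sum_hh1[OF b' ps] by simp
    finally show ?thesis .
  qed
  show ?thesis
  proof (cases "n1 = n2")
    case True
    have "expectation (\<lambda>w. (hh p a (taus n1 w) * u n1 w) * (hh p b (taus n2 w) * u n2 w))
        = expectation (\<lambda>w. (hh p a (taus n1 w) * hh p b (taus n1 w)) * (u n1 w)\<^sup>2)"
      using True by (simp add: power2_eq_square algebra_simps)
    also have "\<dots> = (\<Sum>j\<in>{0..tau}. (hh p a j * hh p b j) * p j) * expectation (\<lambda>w. (u n1 w)\<^sup>2)"
    proof (rule FA[of "\<lambda>w. (u n1 w)\<^sup>2" n1 "\<lambda>j. hh p a j * hh p b j"])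
      show "(\<lambda>w. (u n1 w)\<^sup>2) \<in> borel_measurable (F n1)" using uF[of n1] by measurable
    qed (rule ui)
    also have "\<dots> = (kron (int a - int b) * p a - p a * p b) * expectation (\<lambda>w. (u n1 w)\<^sup>2)"
      using sum_hh2[OF a b ps] by simp
    finally show ?thesis using True by simp
  next
    case False
    then consider "n1 < n2" | "n2 < n1" by linarith
    then show ?thesis
    proof cases
      case 1 then show ?thesis using lt[OF 1 b] False by simp
    next
      case 2
      have "expectation (\<lambda>w. (hh p a (taus n1 w) * u n1 w) * (hh p b (taus n2 w) * u n2 w))
          = expectation (\<lambda>w. (hh p b (taus n2 w) * u n2 w) * (hh p a (taus n1 w) * u n1 w))"
        by (simp add: mult.commute)
      then show ?thesis using lt[OF 2 a] False by simp
    qed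
  qed
qed

end

theorem lemma4:
  fixes M :: "'w measure"
    and A :: "real^'n^'n" and B C :: "real^'n"
    and Ak :: "real^'m^'m" and Bk Ck :: "real^'m" and Dk :: real
    and alpha p :: "nat \<Rightarrow> real" and tau :: nat
    and taus :: "nat \<Rightarrow> 'w \<Rightarrow> nat"
    and v u y :: "nat \<Rightarrow> 'w \<Rightarrow> real"
  assumes "prob_space M"
    \<comment> \<open>i.i.d. delay sequence with values in D = {0..tau} and Pr{tau_n = i} = p_i\<close>
    and "\<And>n. taus n \<in> measurable M (count_space UNIV)"
    and "\<And>n w. w \<in> space M \<Longrightarrow> taus n w \<le> tau"
    and "prob_space.indep_vars M (\<lambda>_. count_space UNIV) taus UNIV"
    and "\<And>n i. i \<le> tau \<Longrightarrow> measure M {w \<in> space M. taus n w = i} = p i"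
    and "(\<Sum>i\<in>{0..tau}. p i) = 1"
    \<comment> \<open>zero-mean white noise input with bounded variances\<close>
    and "\<And>k. v k \<in> borel_measurable M"
    and "prob_space.indep_vars M (\<lambda>_. borel) v UNIV"
    and "\<And>k. integrable M (v k)"
    and "\<And>k. integrable M (\<lambda>w. (v k w)\<^sup>2)"
    and "\<And>k. prob_space.expectation M (v k) = 0"
    and "\<exists>b. \<forall>k. prob_space.variance M (v k) \<le> b"
    \<comment> \<open>delay sequence independent of the input\<close>
    and "prob_space.indep_set M
           (sigma_sets (space M) (\<Union>n. {taus n -` A \<inter> space M | A. A \<in> sets (count_space UNIV)}))
           (sigma_sets (space M) (\<Union>k. {v k -` A \<inter> space M | A. A \<in> sets borel}))"
    \<comment> \<open>closed loop\<close>
    and "\<And>w. w \<in> space M \<Longrightarrow> closed_loop A B C Ak Bk Ck Dk alpha tau taus v u y w"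
  shows "(\<forall>i k1 k2. i \<le> tau \<longrightarrow>
            prob_space.expectation M
              (\<lambda>w. d_ch alpha p tau taus u i k1 w * d_ch alpha p tau taus u i k2 w)
            = kron (int k1 - int k2) * (alpha i)\<^sup>2 * p i * (1 - p i)
              * prob_space.expectation M (\<lambda>w. (sig_ext u (int k1 - int i) w)\<^sup>2))
       \<and> (\<forall>i1 i2 k1 k2. i1 \<le> tau \<longrightarrow> i2 \<le> tau \<longrightarrow> i1 \<noteq> i2 \<longrightarrow>
            prob_space.expectation M
              (\<lambda>w. d_ch alpha p tau taus u i1 k1 w * d_ch alpha p tau taus u i2 k2 w)
            = - kron (int k1 - int i1 - int k2 + int i2) * alpha i1 * alpha i2 * p i1 * p i2
              * prob_space.expectation M (\<lambda>w. (sig_ext u (int k1 - int i1) w)\<^sup>2))"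
proof -
  note pM = assms(1)
  interpret P: prob_space M by (rule pM)
  note tm = assms(2) and tb = assms(3) and it = assms(4) and tp = assms(5) and ps = assms(6)
    and vm = assms(7) and vsq = assms(10) and tv = assms(13) and cl = assms(14)
  define Q where "Q w xp xk \<longleftrightarrow> xp 0 = 0 \<and> xk 0 = 0 \<and>
        (\<forall>k. xp (Suc k) = A *v xp k + (v k w - chan_out alpha tau taus u k w) *\<^sub>R B) \<and>
        (\<forall>k. y k w = C \<bullet> xp k) \<and>
        (\<forall>k. xk (Suc k) = Ak *v xk k + y k w *\<^sub>R Bk) \<and>
        (\<forall>k. u k w = Ck \<bullet> xk k + Dk * y k w)" for w and xp :: "nat \<Rightarrow> real^'n" and xk :: "nat \<Rightarrow> real^'m"
  have "\<forall>w\<in>space M. \<exists>xp xk. Q w xp xk"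
    using cl unfolding closed_loop_def Q_def by blast
  then obtain XP where "\<forall>w\<in>space M. \<exists>xk. Q w (XP w) xk"
    by (rule bchoice[THEN exE]) blast
  then obtain XK where QQ: "\<forall>w\<in>space M. Q w (XP w) (XK w)"
    by (rule bchoice[THEN exE]) blast
  have r0: "\<And>w. w \<in> space M \<Longrightarrow> XP w 0 = 0" "\<And>w. w \<in> space M \<Longrightarrow> XK w 0 = 0"
    using QQ unfolding Q_def by blast+
  have rP: "\<And>w k. w \<in> space M \<Longrightarrow> XP w (Suc k) = A *v XP w k + (v k w - chan_out alpha tau taus u k w) *\<^sub>R B"
    using QQ unfolding Q_def by blast
  have rK: "\<And>w k. w \<in> space M \<Longrightarrow> XK w (Suc k) = Ak *v XK w k + (C \<bullet> XP w k) *\<^sub>R Bk"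
    using QQ unfolding Q_def by metis
  have ru: "\<And>w k. w \<in> space M \<Longrightarrow> u k w = Ck \<bullet> XK w k + Dk * (C \<bullet> XP w k)"
    using QQ unfolding Q_def by metis
  define F where "F k = sigma (space M) (Gs M taus v k)" for k
  have sp: "\<And>k. space (F k) = space M" unfolding F_def by (rule P.Fsets(2)[OF tm vm])
  have mono: "\<And>j k. j \<le> k \<Longrightarrow> sets (F j) \<subseteq> sets (F k)" unfolding F_def by (rule P.Fmono[OF tm vm])
  have tF: "\<And>j k. j < k \<Longrightarrow> taus j \<in> measurable (F k) (count_space UNIV)"
    unfolding F_def by (rule P.Fm_taus[OF tm vm])
  have vF: "\<And>j k. v j \<in> borel_measurable (F k)" unfolding F_def by (rule P.Fm_v[OF tm vm])
  have uF: "\<And>k. u k \<in> borel_measurable (F k)"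
    by (rule loop_meas[of F "space M", OF sp mono tF vF r0 rP rK ru])
  have uM: "\<And>k. u k \<in> borel_measurable M"
  proof -
    fix k
    have "sets (F k) \<subseteq> sets M" unfolding F_def by (rule P.Fsub[OF tm vm])
    then show "u k \<in> borel_measurable M"
      using subsetD[OF measurable_mono[OF order_refl refl _ sp[of k]] uF[of k]] by blast
  qed
  have vM: "\<And>k. v k \<in> borel_measurable M" by (rule vm)
  have ui: "\<And>k. integrable M (\<lambda>w. (u k w)\<^sup>2)"
  proof -
    fix k
    obtain c where c0: "c \<ge> 0" and cb: "\<And>w. w \<in> space M \<Longrightarrow> \<bar>u k w\<bar> \<le> c * (\<Sum>l<k. \<bar>v l w\<bar>)"
      using loop_bound[of "space M" XP XK A v alpha tau taus u B Ak C Bk Ck Dk k, OF r0 rP rK ru] by blast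
    show "integrable M (\<lambda>w. (u k w)\<^sup>2)"
    proof (rule Bochner_Integration.integrable_bound)
      show "integrable M (\<lambda>w. c\<^sup>2 * (\<Sum>l<k. \<bar>v l w\<bar>)\<^sup>2)"
        by (rule integrable_mult_right, rule P.sq_sum_int[OF vsq vM])
      show "(\<lambda>w. (u k w)\<^sup>2) \<in> borel_measurable M" using uM[of k] by measurable
      show "AE w in M. norm ((u k w)\<^sup>2) \<le> norm (c\<^sup>2 * (\<Sum>l<k. \<bar>v l w\<bar>)\<^sup>2)"
      proof (rule AE_I2)
        fix w assume w: "w \<in> space M"
        have "\<bar>u k w\<bar>\<^sup>2 \<le> (c * (\<Sum>l<k. \<bar>v l w\<bar>))\<^sup>2"
          by (rule power_mono[OF cb[OF w] abs_ge_zero])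
        then show "norm ((u k w)\<^sup>2) \<le> norm (c\<^sup>2 * (\<Sum>l<k. \<bar>v l w\<bar>)\<^sup>2)"
          by (simp add: power_mult_distrib)
      qed
    qed
  qed
  have FA: "P.expectation (\<lambda>w. g (taus n w) * X w) = (\<Sum>j\<in>{0..tau}. g j * p j) * P.expectation X"
    if "X \<in> borel_measurable (F n)" "integrable M X" for n X and g :: "nat \<Rightarrow> real"
  proof -
    have tbn: "\<And>w. w \<in> space M \<Longrightarrow> taus n w \<le> tau" using tb by simp
    have tpn: "\<And>i. i \<le> tau \<Longrightarrow> measure M {w \<in> space M. taus n w = i} = p i" using tp by simp
    have "P.expectation (\<lambda>w. g (taus n w) * X w) = P.expectation (\<lambda>w. g (taus n w)) * P.expectation X"
      by (rule P.factor[OF tm vm it tv that[unfolded F_def] P.exp_g(1)[of taus n tau p g, OF tm[of n] tbn tpn]])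
    also have "\<dots> = (\<Sum>j\<in>{0..tau}. g j * p j) * P.expectation X"
      using P.exp_g(2)[of taus n tau p g, OF tm[of n] tbn tpn] by simp
    finally show ?thesis .
  qed
  have core: "P.expectation (\<lambda>w. (hh p a (taus n1 w) * u n1 w) * (hh p b (taus n2 w) * u n2 w))
    = (if n1 = n2 then (kron (int a - int b) * p a - p a * p b) * P.expectation (\<lambda>w. (u n1 w)\<^sup>2) else 0)"
    if "a \<le> tau" "b \<le> tau" for a b n1 n2
    by (rule P.core[OF sp mono tF uF uM ui FA tm ps that])
  have dch: "d_ch alpha p tau taus u i k w = (if i \<le> k then alpha i * (hh p i (taus (k - i) w) * u (k - i) w) else 0)"
    if "i \<le> tau" for i k w
    using that by (cases "i \<le> k") (auto simp: d_ch_def omega_ch_def hh_def)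
  have sig: "sig_ext u (int k - int i) = (if i \<le> k then u (k - i) else (\<lambda>w. 0))" for k i
    by (auto simp: sig_ext_def fun_eq_iff nat_diff_distrib)
  have gen: "P.expectation (\<lambda>w. d_ch alpha p tau taus u i1 k1 w * d_ch alpha p tau taus u i2 k2 w)
      = (if i1 \<le> k1 \<and> i2 \<le> k2 \<and> k1 - i1 = k2 - i2 then alpha i1 * alpha i2 *
           (kron (int i1 - int i2) * p i1 - p i1 * p i2) * P.expectation (\<lambda>w. (u (k1 - i1) w)\<^sup>2) else 0)"
    if i1: "i1 \<le> tau" and i2: "i2 \<le> tau" for i1 i2 k1 k2
  proof (cases "i1 \<le> k1 \<and> i2 \<le> k2")
    case True
    have "P.expectation (\<lambda>w. d_ch alpha p tau taus u i1 k1 w * d_ch alpha p tau taus u i2 k2 w)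
      = P.expectation (\<lambda>w. (alpha i1 * alpha i2) * ((hh p i1 (taus (k1 - i1) w) * u (k1 - i1) w) * (hh p i2 (taus (k2 - i2) w) * u (k2 - i2) w)))"
      using True by (simp add: dch[OF i1] dch[OF i2] algebra_simps)
    also have "\<dots> = (alpha i1 * alpha i2) * P.expectation (\<lambda>w. (hh p i1 (taus (k1 - i1) w) * u (k1 - i1) w) * (hh p i2 (taus (k2 - i2) w) * u (k2 - i2) w))"
      by (rule integral_mult_right_zero)
    also have "\<dots> = (if i1 \<le> k1 \<and> i2 \<le> k2 \<and> k1 - i1 = k2 - i2 then alpha i1 * alpha i2 *
           (kron (int i1 - int i2) * p i1 - p i1 * p i2) * P.expectation (\<lambda>w. (u (k1 - i1) w)\<^sup>2) else 0)"
      using True by (simp add: core[OF i1 i2])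
    finally show ?thesis .
  next
    case False
    then have "(\<lambda>w. d_ch alpha p tau taus u i1 k1 w * d_ch alpha p tau taus u i2 k2 w) = (\<lambda>w. 0)"
      by (auto simp: dch[OF i1] dch[OF i2])
    moreover have nc: "\<not> (i1 \<le> k1 \<and> i2 \<le> k2 \<and> k1 - i1 = k2 - i2)" using False by blast
    ultimately show ?thesis by (subst if_not_P[OF nc]) simp
  qed
  show ?thesis
  proof (intro conjI allI impI)
    fix i k1 k2 assume i: "i \<le> tau"
    show "P.expectation (\<lambda>w. d_ch alpha p tau taus u i k1 w * d_ch alpha p tau taus u i k2 w)
       = kron (int k1 - int k2) * (alpha i)\<^sup>2 * p i * (1 - p i) * P.expectation (\<lambda>w. (sig_ext u (int k1 - int i) w)\<^sup>2)"
      unfolding gen[OF i i] sig by (auto simp: kron_def power2_eq_square algebra_simps)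
  next
    fix i1 i2 k1 k2 assume i1: "i1 \<le> tau" and i2: "i2 \<le> tau" and ne: "i1 \<noteq> i2"
    show "P.expectation (\<lambda>w. d_ch alpha p tau taus u i1 k1 w * d_ch alpha p tau taus u i2 k2 w)
       = - kron (int k1 - int i1 - int k2 + int i2) * alpha i1 * alpha i2 * p i1 * p i2
         * P.expectation (\<lambda>w. (sig_ext u (int k1 - int i1) w)\<^sup>2)"
      unfolding gen[OF i1 i2] sig using ne by (auto simp: kron_def algebra_simps)
  qed
qed

end
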